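(* Consider the structured private pooled-sequencing scheme with random coverage depth described in the context, with $M$ unknown individuals, $M$ known individuals, base coverage $\alpha_0\in\mathbb{N}$, coverage variance parameter $\sigma_\alpha^2\ge 0$, and per-read error probability $\eta\in(0,1/2)$. Let $\epsilon\in(0,1)$. If $\alpha_0\geq\max\{e_1,e_2\}$, where $$e_1=\frac{16\eta(1-\eta)}{(1-2\eta)^2}\left(2^{M+1}-2\right)\ln\left(\frac{1}{\epsilon}\right),\qquad e_2=\sqrt{16\sigma_\alpha^2\left(1+\frac{\eta^2}{(1-2\eta)^2}\right)\left(2^{M+1}-2\right)\ln\left(\frac{1}{\epsilon}\right)},$$ then the data collector can produce an estimate $\hat{\mathbf{X}}=\phi(\mathbf{Y},\mathcal{R})$ satisfying $\mathbb{P}(\hat{\mathbf{x}}_n\neq\mathbf{x}_n)\le\epsilon$ for every SNP position $n\in[N]$.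
   Context: Setting. Each genome is described by $N$ SNP positions with binary values. There are $M$ "unknown" individuals $m\in\{0,\dots,M-1\}$ with SNP matrix $\mathbf{X}\in\{0,1\}^{M\times N}$ (entries $X_{m,n}$, unknown to everyone) and $M$ "known" individuals $k\in\{0,\dots,M-1\}$ with SNP matrix $\mathbf{Y}$ (entries $y_{k,n}$ known to the trusted data collector, i.i.d. uniform from the sequencer's viewpoint). Genomes are sheared into fragments, each containing at most one SNP and mappable unambiguously to its SNP position; all fragments are pooled without individual labels and read by a sequencer, each SNP read being flipped independently with probability $\eta$; $\mathcal{R}$ denotes the set of reads. In the structured scheme with random coverage depth, the number $\alpha_{m,n}$ of fragments of unknown individual $m$ covering position $n$ is modeled as $\mathcal{N}(2^m\alpha_0,2^m\sigma_\alpha^2)$, and the number $\tilde\alpha_{k,n}$ for known individual $k$ as $\mathcal{N}(2^k\alpha_0,2^k\sigma_\alpha^2)$ (Gaussian approximations of binomial counts). For each position the reads reveal only the total count of read 1's among fragments covering $n$; as in the paper, aggregated read noise is modeled by its central-limit Gaussian approximation, so that after normalization the data collector observes $G_n=\sum_{m=0}^{M-1}(2^m+\delta_{m,n})X_{m,n}+\sum_{k=0}^{M-1}(2^k+\tilde\delta_{k,n})y_{k,n}+Z_n$, with $\delta_{m,n}\sim\mathcal{N}(0,2^m\sigma_\alpha^2/\alpha_0^2)$, $\tilde\delta_{k,n}\sim\mathcal{N}(0,2^k\sigma_\alpha^2/\alpha_0^2)$, and $Z_n\sim\mathcal{N}\big(0,\frac{2^{M+1}-2}{(1-2\eta)^2}(\frac{\eta(1-\eta)}{\alpha_0}+\eta^2\frac{\sigma_\alpha^2}{\alpha_0^2})\big)$.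 $\mathbf{x}_n,\hat{\mathbf{x}}_n$ denote the $n$-th columns of $\mathbf{X},\hat{\mathbf{X}}$. *)

theory Defs
  imports "HOL-Probability.Probability"
begin

definition gauss :: "real \<Rightarrow> real \<Rightarrow> real measure" where
  "gauss mu v = (if v = 0 then return borel mu
                 else density lborel (normal_density mu (sqrt v)))"

text \<open>Variance of the aggregated (CLT-approximated) read noise Z_n.\<close>
definition var_Z :: "nat \<Rightarrow> nat \<Rightarrow> real \<Rightarrow> real \<Rightarrow> real" where
  "var_Z M alpha0 sigma2 eta =
     ((2::real)^(M+1) - 2) / (1 - 2*eta)^2 *
     (eta*(1-eta)/real alpha0 + eta^2 * sigma2 / (real alpha0)^2)"

text \<open>Joint law of the noise at one SNP position n:
  ((delta_{0..M-1,n}, tilde delta_{0..M-1,n}), Z_n), all independent.\<close>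
definition noise_space :: "nat \<Rightarrow> nat \<Rightarrow> real \<Rightarrow> real \<Rightarrow>
    (((nat \<Rightarrow> real) \<times> (nat \<Rightarrow> real)) \<times> real) measure" where
  "noise_space M alpha0 sigma2 eta =
     (PiM {..<M} (\<lambda>m. gauss 0 (2^m * sigma2 / (real alpha0)^2))
      \<Otimes>\<^sub>M PiM {..<M} (\<lambda>k. gauss 0 (2^k * sigma2 / (real alpha0)^2)))
      \<Otimes>\<^sub>M gauss 0 (var_Z M alpha0 sigma2 eta)"

text \<open>Normalized observation G_n for unknown column x and known column y.\<close>
definition obs :: "nat \<Rightarrow> (nat \<Rightarrow> bool) \<Rightarrow> (nat \<Rightarrow> bool) \<Rightarrow>
    ((nat \<Rightarrow> real) \<times> (nat \<Rightarrow> real)) \<times> real \<Rightarrow> real" where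
  "obs M x y w =
     (case w of ((d, dt), z) \<Rightarrow>
        (\<Sum>m<M. (2^m + d m) * of_bool (x m))
      + (\<Sum>k<M. (2^k + dt k) * of_bool (y k)) + z)"

end

theory Submission
  imports Defs
begin

lemma gauss_sets[simp, measurable_cong]: "sets (gauss mu v) = sets borel"
  by (simp add: gauss_def)

lemma gauss_space[simp]: "space (gauss mu v) = UNIV"
  by (simp add: gauss_def)

lemma prob_space_gauss[intro, simp]: "v \<ge> 0 \<Longrightarrow> prob_space (gauss mu v)"
proof -
  assume "v \<ge> 0"
  show ?thesis
  proof (cases "v = 0")
    case True then show ?thesis by (simp add: gauss_def prob_space_return)
  next
    case False
    then have "0 < sqrt v" using \<open>v \<ge> 0\<close> by simp
    then show ?thesis using False
      by (simp add: gauss_def prob_space_normal_density)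
  qed
qed

lemma AE_gauss0: "AE x in gauss mu 0. x = mu"
  unfolding gauss_def by (simp add: AE_return)

lemma distr_pair_snd':
  assumes "prob_space A" "prob_space B"
  shows "distr (A \<Otimes>\<^sub>M B) B snd = B"
proof (intro measure_eqI)
  interpret a: prob_space A by fact
  interpret b: prob_space B by fact
  fix X assume X: "X \<in> sets (distr (A \<Otimes>\<^sub>M B) B snd)"
  from X have "emeasure (distr (A \<Otimes>\<^sub>M B) B snd) X = emeasure (A \<Otimes>\<^sub>M B) (space A \<times> X)"
    by (auto simp add: emeasure_distr space_pair_measure dest: sets.sets_into_space intro!: arg_cong2[where f=emeasure])
  with X show "emeasure (distr (A \<Otimes>\<^sub>M B) B snd) X = emeasure B X"
    by (simp add: b.emeasure_pair_measure_Times a.emeasure_space_1)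
qed simp

lemma conv_gauss:
  assumes v: "v \<ge> 0" and u: "u \<ge> 0"
  shows "distr (gauss 0 v \<Otimes>\<^sub>M gauss 0 u) borel (\<lambda>(a,b). a + b) = gauss 0 (v + u)"
proof -
  let ?P = "gauss 0 v \<Otimes>\<^sub>M gauss 0 u"
  interpret a: prob_space "gauss 0 v" using v by simp
  interpret b: prob_space "gauss 0 u" using u by simp
  interpret p: pair_prob_space "gauss 0 v" "gauss 0 u" ..
  have pp: "prob_space ?P" by (rule p.prob_space_axioms)
  have fstd: "distr ?P borel fst = gauss 0 v"
    using b.distr_pair_fst[of "gauss 0 v"] by (metis distr_cong gauss_sets)
  have sndd: "distr ?P borel snd = gauss 0 u"
    using distr_pair_snd'[of "gauss 0 v" "gauss 0 u"] v u by (metis distr_cong gauss_sets prob_space_gauss)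
  show ?thesis
  proof (cases "v = 0")
    case True
    have "AE w in ?P. fst w = 0"
    proof -
      have "AE x in distr ?P borel fst. x = 0"
        using AE_gauss0[of 0] \<open>v = 0\<close> by (subst fstd) (metis (no_types))
      then show ?thesis by (rule AE_distrD[rotated]) simp
    qed
    then have "distr ?P borel (\<lambda>(a,b). a + b) = distr ?P borel snd"
      by (intro distr_cong_AE) (auto elim!: eventually_mono)
    then show ?thesis using sndd True by simp
  next
    case v0: False
    show ?thesis
    proof (cases "u = 0")
      case True
      have "AE w in ?P. snd w = 0"
      proof -
        have "AE x in distr ?P borel snd. x = 0"
          using AE_gauss0[of 0] \<open>u = 0\<close> by (subst sndd) (metis (no_types))
        then show ?thesis by (rule AE_distrD[rotated]) simp
      qed
      then have "distr ?P borel (\<lambda>(a,b). a + b) = distr ?P borel fst"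
        by (intro distr_cong_AE) (auto elim!: eventually_mono)
      then show ?thesis using fstd True by simp
    next
      case u0: False
      have vp: "0 < sqrt v" "0 < sqrt u" using v u v0 u0 by auto
      have dX: "distributed ?P lborel fst (normal_density 0 (sqrt v))"
        unfolding distributed_def using fstd v0
        by (auto simp: gauss_def intro: distr_cong[THEN trans])
      have dY: "distributed ?P lborel snd (normal_density 0 (sqrt u))"
        unfolding distributed_def using sndd u0
        by (auto simp: gauss_def intro: distr_cong[THEN trans])
      have ind: "prob_space.indep_var ?P borel fst borel snd"
      proof -
        have "distr ?P (borel \<Otimes>\<^sub>M borel) (\<lambda>x. (fst x, snd x)) = distr ?P ?P (\<lambda>x. x)"
          by (intro distr_cong) (auto intro: sets_pair_measure_cong)
        then show ?thesis
          by (subst prob_space.indep_var_distribution_eq[OF pp]) (simp add: fstd sndd)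
      qed
      have "distributed ?P lborel (\<lambda>x. fst x + snd x) (normal_density (0 + 0) (sqrt ((sqrt v)\<^sup>2 + (sqrt u)\<^sup>2)))"
        by (rule prob_space.add_indep_normal[OF pp ind vp dX dY])
      then have "distr ?P lborel (\<lambda>x. fst x + snd x) = density lborel (normal_density 0 (sqrt (v + u)))"
        using v u by (simp add: distributed_def)
      moreover have "distr ?P borel (\<lambda>(a,b). a + b) = distr ?P lborel (\<lambda>x. fst x + snd x)"
        by (intro distr_cong) auto
      ultimately show ?thesis using v u v0 u0 by (simp add: gauss_def)
    qed
  qed
qed

lemma lift_gauss:
  assumes P: "prob_space P" and Q: "prob_space Q"
    and f[measurable]: "f \<in> borel_measurable P" and g[measurable]: "g \<in> borel_measurable Q"
    and df: "distr P borel f = gauss 0 v" and dg: "distr Q borel g = gauss 0 u"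
    and v: "v \<ge> 0" and u: "u \<ge> 0"
  shows "distr (P \<Otimes>\<^sub>M Q) borel (\<lambda>(a,b). f a + g b) = gauss 0 (v + u)"
proof -
  interpret q: prob_space Q by fact
  have "distr (P \<Otimes>\<^sub>M Q) borel (\<lambda>(a,b). f a + g b)
     = distr (distr (P \<Otimes>\<^sub>M Q) (borel \<Otimes>\<^sub>M borel) (\<lambda>(a,b). (f a, g b))) borel (\<lambda>(a,b). a + b)"
    by (subst distr_distr) (auto simp: comp_def split_beta')
  also have "distr (P \<Otimes>\<^sub>M Q) (borel \<Otimes>\<^sub>M borel) (\<lambda>(a,b). (f a, g b)) = distr P borel f \<Otimes>\<^sub>M distr Q borel g"
    by (rule pair_measure_distr[symmetric]) (auto simp: dg intro: prob_space_imp_sigma_finite u)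
  also have "\<dots> = gauss 0 v \<Otimes>\<^sub>M gauss 0 u" by (simp add: df dg)
  also have "distr (gauss 0 v \<Otimes>\<^sub>M gauss 0 u) borel (\<lambda>(a,b). a + b) = gauss 0 (v + u)"
    by (rule conv_gauss[OF v u])
  finally show ?thesis .
qed

lemma scale_gauss:
  assumes P: "prob_space P" and f[measurable]: "f \<in> borel_measurable P"
    and df: "distr P borel f = gauss 0 v"
  shows "distr P borel (\<lambda>a. of_bool b * f a) = gauss 0 (of_bool b * v)"
proof (cases b)
  case True then show ?thesis using df by simp
next
  case False
  interpret prob_space P by fact
  show ?thesis using False by (simp add: gauss_def)
qed

lemma PiM_gauss:
  fixes M :: nat
  assumes s: "\<And>m. s m \<ge> 0"
  shows "distr (PiM {..<M} (\<lambda>m. gauss 0 (s m))) borel (\<lambda>d. \<Sum>m<M. of_bool (b m) * d m)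
         = gauss 0 (\<Sum>m<M. of_bool (b m) * s m)"
proof (induction M)
  case 0
  interpret prob_space "PiM {} (\<lambda>m::nat. gauss 0 (s m))"
    by (rule prob_space_PiM) (simp add: s)
  show ?case by (simp, simp add: gauss_def)
next
  case (Suc M)
  let ?N = "\<lambda>m. gauss 0 (s m)"
  interpret ps: product_prob_space ?N UNIV
    by (auto simp: product_prob_space_def product_prob_space_axioms_def product_sigma_finite_def s
        intro: prob_space_imp_sigma_finite)
  have un: "{..<M} \<union> {M} = {..<Suc M}" by auto
  have eq: "PiM {..<Suc M} ?N = distr (PiM {..<M} ?N \<Otimes>\<^sub>M PiM {M} ?N) (PiM {..<Suc M} ?N) (merge {..<M} {M})"
    using ps.distr_merge[of "{..<M}" "{M}"] un by simp
  have "distr (PiM {..<Suc M} ?N) borel (\<lambda>d. \<Sum>m<Suc M. of_bool (b m) * d m)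
     = distr (distr (PiM {..<M} ?N \<Otimes>\<^sub>M PiM {M} ?N) (PiM {..<Suc M} ?N) (merge {..<M} {M})) borel (\<lambda>d. \<Sum>m<Suc M. of_bool (b m) * d m)"
    using eq by (rule arg_cong[where f = "\<lambda>P. distr P borel (\<lambda>d. \<Sum>m<Suc M. of_bool (b m) * d m)"])
  also have "\<dots> = distr (PiM {..<M} ?N \<Otimes>\<^sub>M PiM {M} ?N) borel (\<lambda>w. \<Sum>m<Suc M. of_bool (b m) * merge {..<M} {M} w m)"
  proof -
    have mm: "merge {..<M} {M} \<in> measurable (PiM {..<M} ?N \<Otimes>\<^sub>M PiM {M} ?N) (PiM {..<Suc M} ?N)"
      using measurable_merge[of "{..<M}" "{M}" ?N] unfolding un .
    show ?thesis by (subst distr_distr[OF _ mm]) (auto simp: comp_def simp del: lessThan_Suc)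
  qed
  also have "\<dots> = distr (PiM {..<M} ?N \<Otimes>\<^sub>M PiM {M} ?N) borel (\<lambda>(x,y). (\<Sum>m<M. of_bool (b m) * x m) + of_bool (b M) * y M)"
    by (intro distr_cong) (auto simp: merge_def)
  also have "\<dots> = gauss 0 ((\<Sum>m<M. of_bool (b m) * s m) + of_bool (b M) * s M)"
  proof (rule lift_gauss)
    show "prob_space (PiM {..<M} ?N)" by (rule prob_space_PiM) (simp add: s)
    show "prob_space (PiM {M} ?N)" by (rule prob_space_PiM) (simp add: s)
    show "distr (PiM {M} ?N) borel (\<lambda>y. of_bool (b M) * y M) = gauss 0 (of_bool (b M) * s M)"
    proof (rule scale_gauss)
      show "prob_space (PiM {M} ?N)" by (rule prob_space_PiM) (simp add: s)
      have "distr (PiM {M} ?N) (?N M) (\<lambda>y. y M) = ?N M"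
        by (rule distr_PiM_component) (auto simp: s)
      then show "distr (PiM {M} ?N) borel (\<lambda>y. y M) = gauss 0 (s M)"
        by (metis distr_cong gauss_sets)
    qed simp
  qed (insert Suc, auto simp: s intro!: sum_nonneg)
  finally show ?case by simp
qed

lemma gauss_tail:
  assumes s: "0 < s" and t: "0 < t"
  shows "measure (density lborel (normal_density 0 s)) {u. t \<le> \<bar>u\<bar>} \<le> exp (- t\<^sup>2 / (2 * s\<^sup>2))"
proof -
  define \<phi> where "\<phi> = normal_density 0 s"
  define e where "e = exp (- t\<^sup>2 / (2 * s\<^sup>2))"
  have [measurable]: "\<phi> \<in> borel_measurable borel" unfolding \<phi>_def by simp
  have sym: "\<phi> (- x) = \<phi> x" for x unfolding \<phi>_def by (simp add: normal_density_def)
  have sym2: "\<phi> (- x - t) = \<phi> (x + t)" for x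
    unfolding \<phi>_def by (simp add: normal_density_def power2_eq_square algebra_simps)
  have pt: "\<phi> (t + y) \<le> e * \<phi> y" if "0 \<le> y" for y
  proof -
    have "(t + y)\<^sup>2 \<ge> t\<^sup>2 + y\<^sup>2" using that t by (simp add: power2_eq_square algebra_simps)
    then have "- (t + y)\<^sup>2 / (2 * s\<^sup>2) \<le> - t\<^sup>2 / (2 * s\<^sup>2) + - y\<^sup>2 / (2 * s\<^sup>2)"
      using s by (simp add: field_simps)
    then have "exp (- (t + y)\<^sup>2 / (2 * s\<^sup>2)) \<le> e * exp (- y\<^sup>2 / (2 * s\<^sup>2))"
      unfolding e_def by (simp add: exp_add[symmetric])
    then show ?thesis unfolding \<phi>_def normal_density_def using s
      by (simp add: divide_right_mono)
  qed
  have one: "(\<integral>\<^sup>+x. ennreal (\<phi> x) \<partial>lborel) = 1"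
  proof -
    interpret prob_space "density lborel \<phi>" unfolding \<phi>_def by (rule prob_space_normal_density) (rule s)
    have "emeasure (density lborel \<phi>) UNIV = 1" using emeasure_space_1 by simp
    then show ?thesis by (simp add: emeasure_density)
  qed
  define J where "J = (\<integral>\<^sup>+y. ennreal (\<phi> y) * indicator {0..} y \<partial>lborel)"
  have J1: "J = (\<integral>\<^sup>+y. ennreal (\<phi> y) * indicator {0<..} y \<partial>lborel)"
    unfolding J_def
    by (intro nn_integral_cong_AE) (use AE_lborel_singleton[of 0] in \<open>auto elim!: eventually_mono simp: indicator_def\<close>)
  have J2: "J = (\<integral>\<^sup>+y. ennreal (\<phi> y) * indicator {..0} y \<partial>lborel)"
    unfolding J_def
    using nn_integral_real_affine[of "\<lambda>y. ennreal (\<phi> y) * indicator {..0} y" "-1" 0]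
    by (simp add: sym indicator_def)
  have "J + J = (\<integral>\<^sup>+y. ennreal (\<phi> y) * indicator {0<..} y \<partial>lborel) + (\<integral>\<^sup>+y. ennreal (\<phi> y) * indicator {..0} y \<partial>lborel)"
    using J1 J2 by metis
  also have "\<dots> = (\<integral>\<^sup>+y. ennreal (\<phi> y) * indicator {0<..} y + ennreal (\<phi> y) * indicator {..0} y \<partial>lborel)"
    by (rule nn_integral_add[symmetric]) auto
  also have "\<dots> = (\<integral>\<^sup>+x. ennreal (\<phi> x) \<partial>lborel)"
    by (intro nn_integral_cong) (auto simp: indicator_def)
  finally have JJ: "J + J = 1" using one by simp
  define K where "K = (\<integral>\<^sup>+y. ennreal (\<phi> (t + y)) * indicator {0..} y \<partial>lborel)"
  have e0: "0 \<le> e" unfolding e_def by simp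
  have K: "K \<le> ennreal e * J"
  proof -
    have "K \<le> (\<integral>\<^sup>+y. ennreal e * (ennreal (\<phi> y) * indicator {0..} y) \<partial>lborel)"
      unfolding K_def
    proof (intro nn_integral_mono)
      fix y
      show "ennreal (\<phi> (t + y)) * indicator {0..} y \<le> ennreal e * (ennreal (\<phi> y) * indicator {0..} y)"
      proof (cases "0 \<le> y")
        case True
        have "ennreal (\<phi> (t + y)) \<le> ennreal (e * \<phi> y)" by (rule ennreal_leI) (rule pt[OF True])
        then show ?thesis using True e0 by (simp add: ennreal_mult \<phi>_def)
      qed simp
    qed
    also have "\<dots> = ennreal e * J" unfolding J_def by (rule nn_integral_cmult) simp
    finally show ?thesis .
  qed
  have I1: "(\<integral>\<^sup>+x. ennreal (\<phi> x) * indicator {t..} x \<partial>lborel) = K"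
    unfolding K_def
    using nn_integral_real_affine[of "\<lambda>x. ennreal (\<phi> x) * indicator {t..} x" 1 t]
    by (simp add: indicator_def)
  have I2: "(\<integral>\<^sup>+x. ennreal (\<phi> x) * indicator {..-t} x \<partial>lborel) = K"
    unfolding K_def
    using nn_integral_real_affine[of "\<lambda>x. ennreal (\<phi> x) * indicator {..-t} x" "-1" "-t"]
    by (simp add: indicator_def sym2 algebra_simps)
  have "emeasure (density lborel \<phi>) {u. t \<le> \<bar>u\<bar>} = (\<integral>\<^sup>+x. ennreal (\<phi> x) * indicator {u. t \<le> \<bar>u\<bar>} x \<partial>lborel)"
    by (rule emeasure_density) auto
  also have "\<dots> = (\<integral>\<^sup>+x. ennreal (\<phi> x) * indicator {t..} x + ennreal (\<phi> x) * indicator {..-t} x \<partial>lborel)"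
    using t by (intro nn_integral_cong) (auto simp: indicator_def)
  also have "\<dots> = K + K"
    by (subst nn_integral_add) (auto simp: I1 I2)
  also have "\<dots> \<le> ennreal e * J + ennreal e * J" using K by (intro add_mono)
  also have "\<dots> = ennreal e" by (simp add: distrib_left[symmetric] JJ)
  finally have "emeasure (density lborel \<phi>) {u. t \<le> \<bar>u\<bar>} \<le> ennreal e" .
  then have "measure (density lborel \<phi>) {u. t \<le> \<bar>u\<bar>} \<le> e"
    unfolding measure_def e_def by (simp add: enn2real_leI)
  then show ?thesis unfolding \<phi>_def e_def .
qed

lemma noise_gauss:
  fixes M alpha0 :: nat and sigma2 eta :: real and x y :: "nat \<Rightarrow> bool"
  assumes s: "sigma2 \<ge> 0" and vz: "var_Z M alpha0 sigma2 eta \<ge> 0"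
  shows "distr (noise_space M alpha0 sigma2 eta) borel
     (\<lambda>((d, dt), z). (\<Sum>m<M. of_bool (x m) * d m) + (\<Sum>k<M. of_bool (y k) * dt k) + z)
   = gauss 0 ((\<Sum>m<M. of_bool (x m) * (2^m * sigma2 / (real alpha0)^2))
            + (\<Sum>k<M. of_bool (y k) * (2^k * sigma2 / (real alpha0)^2))
            + var_Z M alpha0 sigma2 eta)"
proof -
  let ?N = "\<lambda>m::nat. gauss 0 (2^m * sigma2 / (real alpha0)^2)"
  have sn: "\<And>m::nat. 2^m * sigma2 / (real alpha0)^2 \<ge> 0" using s by simp
  have pP: "prob_space (PiM {..<M} ?N)" by (rule prob_space_PiM) (simp add: sn)
  have inner: "distr (PiM {..<M} ?N \<Otimes>\<^sub>M PiM {..<M} ?N) borel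
      (\<lambda>(a, b). (\<Sum>m<M. of_bool (x m) * a m) + (\<Sum>k<M. of_bool (y k) * b k))
     = gauss 0 ((\<Sum>m<M. of_bool (x m) * (2^m * sigma2 / (real alpha0)^2))
            + (\<Sum>k<M. of_bool (y k) * (2^k * sigma2 / (real alpha0)^2)))"
    by (rule lift_gauss[OF pP pP _ _ PiM_gauss[OF sn] PiM_gauss[OF sn]])
       (auto intro!: sum_nonneg simp: sn)
  have pPP: "prob_space (PiM {..<M} ?N \<Otimes>\<^sub>M PiM {..<M} ?N)"
    by (intro prob_space_pair pP)
  have "distr (noise_space M alpha0 sigma2 eta) borel
     (\<lambda>((d, dt), z). (\<Sum>m<M. of_bool (x m) * d m) + (\<Sum>k<M. of_bool (y k) * dt k) + z)
     = distr ((PiM {..<M} ?N \<Otimes>\<^sub>M PiM {..<M} ?N) \<Otimes>\<^sub>M gauss 0 (var_Z M alpha0 sigma2 eta)) borel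
       (\<lambda>(p, z). (\<lambda>(a, b). (\<Sum>m<M. of_bool (x m) * a m) + (\<Sum>k<M. of_bool (y k) * b k)) p + (\<lambda>z. z) z)"
    unfolding noise_space_def by (intro distr_cong) auto
  also have "\<dots> = gauss 0 ((\<Sum>m<M. of_bool (x m) * (2^m * sigma2 / (real alpha0)^2))
            + (\<Sum>k<M. of_bool (y k) * (2^k * sigma2 / (real alpha0)^2))
            + var_Z M alpha0 sigma2 eta)"
  proof (rule lift_gauss[OF pPP _ _ _ inner])
    show "distr (gauss 0 (var_Z M alpha0 sigma2 eta)) borel (\<lambda>z. z) = gauss 0 (var_Z M alpha0 sigma2 eta)"
      by (metis distr_cong distr_id gauss_sets)
  qed (auto intro!: sum_nonneg divide_nonneg_nonneg mult_nonneg_nonneg add_nonneg_nonneg simp: sn vz s)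
  finally show ?thesis .
qed

lemma sum_bits_less:
  fixes M :: nat
  shows "(\<Sum>i<M. 2^i * of_bool (b i) :: nat) < 2^M"
proof (induction M)
  case (Suc M)
  have "of_bool (b M) \<le> (1::nat)" by simp
  then have "2^M * of_bool (b M) \<le> (2::nat)^M" by simp
  with Suc show ?case by simp
qed simp

lemma sum_bits:
  fixes M :: nat
  shows "m < M \<Longrightarrow> odd ((\<Sum>i<M. 2^i * of_bool (b i) :: nat) div 2^m) = b m"
proof (induction M arbitrary: m)
  case 0 then show ?case by simp
next
  case (Suc M)
  define S where "S = (\<Sum>i<M. 2^i * of_bool (b i) :: nat)"
  have sum: "(\<Sum>i<Suc M. 2^i * of_bool (b i) :: nat) = S + 2^M * of_bool (b M)"
    by (simp add: S_def)
  show ?case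
  proof (cases "m < M")
    case True
    have "(2::nat)^M = 2^m * 2^(M - m)" using True by (simp add: power_add[symmetric])
    then have "S + 2^M * of_bool (b M) = S + 2^m * (2^(M - m) * of_bool (b M))" by simp
    then have "(S + 2^M * of_bool (b M)) div 2^m = S div 2^m + 2^(M - m) * of_bool (b M)"
      by simp
    moreover have "even ((2::nat)^(M - m) * of_bool (b M))" using True by simp
    ultimately show ?thesis using Suc.IH[OF True] by (simp add: sum S_def)
  next
    case False
    then have mM: "m = M" using Suc.prems by simp
    have "S < 2^M" unfolding S_def by (rule sum_bits_less)
    then have "(S + 2^M * of_bool (b M)) div 2^M = of_bool (b M)"
      by (simp add: div_add1_eq[of S] )
    then show ?thesis unfolding sum mM by simp
  qed
qed

lemma geom2: "(\<Sum>m<M. (2::real)^m) = 2^M - 1"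
  by (induction M) auto

lemma sum_var_le:
  assumes "sigma2 \<ge> 0"
  shows "(\<Sum>m<M. of_bool (x m) * (2^m * sigma2 / (real alpha0)^2)) \<le> (2^M - 1) * sigma2 / (real alpha0)^2"
proof -
  have "(\<Sum>m<M. of_bool (x m) * (2^m * sigma2 / (real alpha0)^2)) \<le> (\<Sum>m<M. (2::real)^m * sigma2 / (real alpha0)^2)"
    by (intro sum_mono) (auto simp: assms)
  also have "\<dots> = (\<Sum>m<M. (2::real)^m) * sigma2 / (real alpha0)^2"
    by (simp add: sum_distrib_right sum_divide_distrib)
  finally show ?thesis by (simp add: geom2)
qed

lemma numeric:
  fixes M alpha0 :: nat and sigma2 eta eps :: real
  assumes "sigma2 \<ge> 0" and "0 < eta" and "eta < 1/2"
    and "0 < eps" and "eps < 1"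
    and h6: "real alpha0 \<ge> 16 * eta * (1 - eta) / (1 - 2*eta)^2 * ((2::real)^(M+1) - 2) * ln (1/eps)"
    and h7: "real alpha0 \<ge> sqrt (16 * sigma2 * (1 + eta^2 / (1 - 2*eta)^2) * ((2::real)^(M+1) - 2) * ln (1/eps))"
    and M: "M > 0"
  shows "var_Z M alpha0 sigma2 eta > 0"
    and "8 * ln (1/eps) * (2 * ((2^M - 1) * sigma2 / (real alpha0)^2) + var_Z M alpha0 sigma2 eta) \<le> 1"
proof -
  define L where "L = ln (1/eps)"
  define c where "c = (1 - 2*eta)^2"
  define S where "S = (2::real)^(M+1) - 2"
  define a where "a = real alpha0"
  have L: "L > 0" unfolding L_def using assms by simp
  have c: "c > 0" unfolding c_def using assms by simp
  have "(2::real)^1 \<le> 2^M" by (rule power_increasing) (use M in auto)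
  then have S: "S > 0" unfolding S_def by simp
  have S2: "2 * (2^M - 1) = S" unfolding S_def by simp
  have e1: "eta * (1 - eta) > 0" using assms by simp
  have h6': "a \<ge> 16 * (eta * (1 - eta) / c * S) * L"
    using h6 unfolding a_def c_def S_def L_def by (simp add: algebra_simps)
  have P: "eta * (1 - eta) / c * S > 0" using e1 c S by simp
  have "16 * (eta * (1 - eta) / c * S) * L > 0" by (rule mult_pos_pos[OF mult_pos_pos[OF _ P] L]) simp
  then have a: "a > 0" using h6' by linarith
  define Q where "Q = sigma2 * (1 + eta^2 / c) * S"
  have Q: "Q \<ge> 0" unfolding Q_def using assms c S by simp
  have "sqrt (16 * Q * L) \<le> a" using h7 unfolding a_def c_def S_def L_def Q_def by (simp add: algebra_simps)
  moreover have "0 \<le> sqrt (16 * Q * L)" using Q L by simp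
  ultimately have "(sqrt (16 * Q * L))^2 \<le> a^2" by (rule power_mono)
  moreover have "(sqrt (16 * Q * L))^2 = 16 * Q * L" using Q L by simp
  ultimately have h7': "16 * Q * L \<le> a^2" by simp
  have vz: "var_Z M alpha0 sigma2 eta = S / c * (eta * (1 - eta) / a + eta^2 * sigma2 / a^2)"
    unfolding var_Z_def S_def c_def a_def by simp
  show "var_Z M alpha0 sigma2 eta > 0"
    unfolding vz using S c a e1 assms by (intro mult_pos_pos divide_pos_pos add_pos_nonneg) auto
  have split: "2 * ((2^M - 1) * sigma2 / a^2) + var_Z M alpha0 sigma2 eta
      = (eta * (1 - eta) / c * S) / a + Q / a^2"
    unfolding vz Q_def S2[symmetric] using a c by (simp add: field_simps)
  define P' where "P' = eta * (1 - eta) / c * S"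
  have t1: "8 * L * (P' / a) \<le> 1/2"
  proof -
    have "8 * L * (P' / a) = (16 * P' * L) / (2 * a)" by (simp add: field_simps)
    also have "\<dots> \<le> a / (2 * a)" by (rule divide_right_mono[OF h6'[folded P'_def]]) (use a in simp)
    also have "\<dots> = 1/2" using a by simp
    finally show ?thesis .
  qed
  have t2: "8 * L * (Q / a^2) \<le> 1/2"
  proof -
    have "8 * L * (Q / a^2) = (16 * Q * L) / (2 * a^2)" by (simp add: field_simps)
    also have "\<dots> \<le> a^2 / (2 * a^2)" by (rule divide_right_mono[OF h7']) (use a in simp)
    also have "\<dots> = 1/2" using a by simp
    finally show ?thesis .
  qed
  have "8 * L * (2 * ((2^M - 1) * sigma2 / a^2) + var_Z M alpha0 sigma2 eta) \<le> 1"
    unfolding split P'_def[symmetric] using t1 t2 by (simp add: distrib_left)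
  then show "8 * ln (1/eps) * (2 * ((2^M - 1) * sigma2 / (real alpha0)^2) + var_Z M alpha0 sigma2 eta) \<le> 1"
    unfolding L_def a_def .
qed

theorem theorem3:
  fixes M alpha0 :: nat and sigma2 eta eps :: real
  assumes "sigma2 \<ge> 0" and "0 < eta" and "eta < 1/2"
    and "0 < eps" and "eps < 1"
    and "real alpha0 \<ge> 16 * eta * (1 - eta) / (1 - 2*eta)^2 * ((2::real)^(M+1) - 2) * ln (1/eps)"
    and "real alpha0 \<ge> sqrt (16 * sigma2 * (1 + eta^2 / (1 - 2*eta)^2) * ((2::real)^(M+1) - 2) * ln (1/eps))"
  shows "\<exists>psi :: (nat \<Rightarrow> bool) \<Rightarrow> real \<Rightarrow> (nat \<Rightarrow> bool).
           (\<forall>y m. (\<lambda>g. psi y g m) \<in> measurable borel (count_space UNIV)) \<and>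
           (\<forall>x y. measure (noise_space M alpha0 sigma2 eta)
                    {w \<in> space (noise_space M alpha0 sigma2 eta).
                       \<exists>m<M. psi y (obs M x y w) m \<noteq> x m} \<le> eps)"
proof -
  define K where "K y = (\<Sum>k<M. 2^k * of_bool (y k) :: real)" for y :: "nat \<Rightarrow> bool"
  define psi where "psi y g m = odd (nat \<lfloor>g - K y + 1/2\<rfloor> div 2^m)" for y g and m :: nat
  define noise where "noise x y = (\<lambda>((d, dt), z). (\<Sum>m<M. of_bool (x m) * d m) + (\<Sum>k<M. of_bool (y k) * dt k) + (z::real))"
    for x y :: "nat \<Rightarrow> bool"
  define X where "X x = (\<Sum>i<M. 2^i * of_bool (x i) :: nat)" for x :: "nat \<Rightarrow> bool"
  let ?NS = "noise_space M alpha0 sigma2 eta"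
  have meas: "(\<lambda>g. psi y g m) \<in> measurable borel (count_space UNIV)" for y m
    unfolding psi_def by measurable
  have nmeas[measurable]: "noise x y \<in> borel_measurable ?NS" for x y
  proof -
    have "noise x y = (\<lambda>w. (\<Sum>m<M. of_bool (x m) * fst (fst w) m) + (\<Sum>k<M. of_bool (y k) * snd (fst w) k) + snd w)"
      by (auto simp: noise_def fun_eq_iff split: prod.split)
    then show ?thesis unfolding noise_space_def by simp
  qed
  have obs_eq: "obs M x y w = real (X x) + K y + noise x y w" for x y w
    by (cases w) (auto simp: obs_def noise_def K_def X_def ring_distribs sum.distrib of_nat_sum mult.commute)
  have good: "psi y (obs M x y w) m = x m" if "\<bar>noise x y w\<bar> < 1/2" "m < M" for x y w m
  proof -
    have "\<lfloor>obs M x y w - K y + 1/2\<rfloor> = int (X x)"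
      unfolding obs_eq using that(1) by (intro floor_unique) auto
    then have n: "nat \<lfloor>obs M x y w - K y + 1/2\<rfloor> = X x" by (simp only: nat_int)
    show ?thesis unfolding psi_def n X_def by (rule sum_bits[OF that(2)])
  qed
  show ?thesis
  proof (intro exI conjI allI)
    fix y m show "(\<lambda>g. psi y g m) \<in> measurable borel (count_space UNIV)" by (rule meas)
  next
    fix x y
    show "measure ?NS {w \<in> space ?NS. \<exists>m<M. psi y (obs M x y w) m \<noteq> x m} \<le> eps"
    proof (cases "M = 0")
      case True then show ?thesis using assms by simp
    next
      case False
      then have M: "M > 0" by simp
      note num = numeric[OF assms M]
      define V where "V = (\<Sum>m<M. of_bool (x m) * (2^m * sigma2 / (real alpha0)^2))
            + (\<Sum>k<M. of_bool (y k) * (2^k * sigma2 / (real alpha0)^2))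
            + var_Z M alpha0 sigma2 eta"
      have a1: "(\<Sum>m<M. of_bool (x m) * (2^m * sigma2 / (real alpha0)^2)) \<le> (2^M - 1) * sigma2 / (real alpha0)^2"
        by (rule sum_var_le[OF assms(1)])
      have a2: "(\<Sum>m<M. of_bool (y m) * (2^m * sigma2 / (real alpha0)^2)) \<le> (2^M - 1) * sigma2 / (real alpha0)^2"
        by (rule sum_var_le[OF assms(1)])
      have Vle: "V \<le> 2 * ((2^M - 1) * sigma2 / (real alpha0)^2) + var_Z M alpha0 sigma2 eta"
        unfolding V_def using a1 a2 by linarith
      have V0: "V > 0" unfolding V_def using num(1) assms(1)
        by (intro add_nonneg_pos add_nonneg_nonneg sum_nonneg) auto
      interpret NS: prob_space ?NS
        unfolding noise_space_def using assms(1) num(1)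
        by (intro prob_space_pair prob_space_PiM) auto
      have dist: "distr ?NS borel (noise x y) = gauss 0 V"
        unfolding noise_def V_def by (rule noise_gauss) (use assms(1) num(1) in auto)
      have "measure ?NS {w \<in> space ?NS. \<exists>m<M. psi y (obs M x y w) m \<noteq> x m}
           \<le> measure ?NS (noise x y -` {u. 1/2 \<le> \<bar>u\<bar>} \<inter> space ?NS)"
      proof (rule NS.finite_measure_mono)
        show "{w \<in> space ?NS. \<exists>m<M. psi y (obs M x y w) m \<noteq> x m} \<subseteq> noise x y -` {u. 1/2 \<le> \<bar>u\<bar>} \<inter> space ?NS"
        proof
          fix w assume w: "w \<in> {w \<in> space ?NS. \<exists>m<M. psi y (obs M x y w) m \<noteq> x m}"
          then obtain m where "m < M" "psi y (obs M x y w) m \<noteq> x m" by blast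
          then have "\<not> \<bar>noise x y w\<bar> < 1/2" using good[of x y w m] by blast
          then show "w \<in> noise x y -` {u. 1/2 \<le> \<bar>u\<bar>} \<inter> space ?NS" using w by simp
        qed
        show "noise x y -` {u. 1/2 \<le> \<bar>u\<bar>} \<inter> space ?NS \<in> sets ?NS"
          by (rule measurable_sets[OF nmeas]) simp
      qed
      also have "\<dots> = measure (distr ?NS borel (noise x y)) {u. 1/2 \<le> \<bar>u\<bar>}"
        by (rule measure_distr[symmetric]) auto
      also have "\<dots> = measure (density lborel (normal_density 0 (sqrt V))) {u. 1/2 \<le> \<bar>u\<bar>}"
        unfolding dist gauss_def using V0 by simp
      also have "\<dots> \<le> exp (- (1/2)\<^sup>2 / (2 * (sqrt V)\<^sup>2))"
        by (rule gauss_tail) (use V0 in auto)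
      also have "\<dots> = exp (- 1 / (8 * V))" using V0 by (simp add: power2_eq_square)
      also have "\<dots> \<le> exp (- ln (1/eps))"
      proof -
        have "8 * ln (1/eps) * V \<le> 1"
        proof -
          have L: "ln (1/eps) > 0" using assms(4,5) by simp
          have "8 * ln (1/eps) * V \<le> 8 * ln (1/eps) * (2 * ((2^M - 1) * sigma2 / (real alpha0)^2) + var_Z M alpha0 sigma2 eta)"
            by (rule mult_left_mono[OF Vle]) (use L in simp)
          then show ?thesis using num(2) by linarith
        qed
        then have "ln (1/eps) \<le> 1 / (8 * V)" using V0 by (simp add: field_simps)
        then show ?thesis by simp
      qed
      also have "\<dots> = eps" using assms(4) by (simp add: ln_div)
      finally show ?thesis .
    qed
  qed
qed

end
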